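(* Let $n\geqslant 2$, $\varepsilon \in [0,1]$, $p \geqslant 2$ an integer, and $\bm x \in \mathcal Y(\varepsilon,p)$. Define $\mu = 1/n$ and the coefficient of variation $\mathrm{CV}(\bm x) = \sqrt{\frac1n \sum_{i=1}^n (x_i-\mu)^2}\,/\,\mu$. Then $$(\mathrm{CV}(\bm x))^2 \leqslant B_p(\varepsilon) := \frac{(D_p+1)^2}{(1+\varepsilon D_p)^2} - 1.$$ Moreover, $B_p(\varepsilon)$ is strictly decreasing in $\varepsilon$ on $[0,1]$, with $B_p(0) = (D_p+1)^2 - 1$ and $B_p(1) = 0$.
   Context: For $\bm x \in \mathbb{R}^n_{\geqslant 0}$ and $p\geqslant 1$, $\|\bm x\|_p = (\sum_{i=1}^n x_i^p)^{1/p}$. Define $D_p = n^{1-1/p}-1$. Let $\Delta_n = \{\bm x \in \mathbb{R}^n_{\geqslant 0} : \sum_{i=1}^n x_i = 1\}$ be the probability simplex, and for $\varepsilon\in[0,1]$ and integer $p\geqslant 2$ let $\mathcal Y(\varepsilon,p) = \{\bm x \in \Delta_n : (1+\varepsilon D_p)\|\bm x\|_p \leqslant 1\}$. *)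

theory Defs
  imports Complex_Main
begin

text \<open>Vectors in R^n are represented as functions nat => real, using coordinates 0..n-1.\<close>

definition pnorm :: "nat \<Rightarrow> nat \<Rightarrow> (nat \<Rightarrow> real) \<Rightarrow> real" where
  "pnorm n p x = (\<Sum>i<n. x i ^ p) powr (1 / real p)"

definition Dp :: "nat \<Rightarrow> nat \<Rightarrow> real" where
  "Dp n p = real n powr (1 - 1 / real p) - 1"

definition simplex :: "nat \<Rightarrow> (nat \<Rightarrow> real) set" where
  "simplex n = {x. (\<forall>i<n. 0 \<le> x i) \<and> (\<Sum>i<n. x i) = 1}"

definition Yset :: "nat \<Rightarrow> real \<Rightarrow> nat \<Rightarrow> (nat \<Rightarrow> real) set" where
  "Yset n \<epsilon> p = {x \<in> simplex n. (1 + \<epsilon> * Dp n p) * pnorm n p x \<le> 1}"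

definition CV :: "nat \<Rightarrow> (nat \<Rightarrow> real) \<Rightarrow> real" where
  "CV n x = (let \<mu> = 1 / real n in sqrt ((1 / real n) * (\<Sum>i<n. (x i - \<mu>)^2)) / \<mu>)"

definition Bp :: "nat \<Rightarrow> nat \<Rightarrow> real \<Rightarrow> real" where
  "Bp n p \<epsilon> = (Dp n p + 1)^2 / (1 + \<epsilon> * Dp n p)^2 - 1"

end

theory Submission
  imports Defs "HOL-Analysis.Analysis"
begin

lemma tangent_pow:
  fixes u :: real and p :: nat
  assumes "u \<ge> 0" "p \<ge> 2"
  shows "u^2 \<le> (2/p) * u^p + (1 - 2/p)"
proof (cases "u = 0")
  case True thus ?thesis using assms by simp
next
  case False
  hence up: "u > 0" using assms by simp
  have "(u^p) powr (2/p) * 1 powr (1 - 2/p) \<le> (2/p) * u^p + (1 - 2/p) * 1"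
    by (rule Youngs_inequality_0) (use assms up in auto)
  moreover have "(u^p) powr (2/p) = u^2"
  proof -
    have "(u^p) powr (2/p) = (u powr p) powr (2/p)" using up by (simp add: powr_realpow)
    also have "\<dots> = u powr (p * (2/p))" by (simp add: powr_powr)
    also have "\<dots> = u powr 2" using assms by simp
    finally show ?thesis using up by (simp add: powr_realpow)
  qed
  ultimately show ?thesis by simp
qed

lemma power_mean:
  fixes x :: "nat \<Rightarrow> real" and n p :: nat
  assumes "n \<ge> 1" "p \<ge> 2" "\<And>i. i < n \<Longrightarrow> x i \<ge> 0" "(\<Sum>i<n. x i ^ p) > 0"
  shows "real n * (\<Sum>i<n. x i ^ 2) \<le> (real n powr (1 - 1/p))^2 * (pnorm n p x)^2"
proof -
  define Sp where "Sp = (\<Sum>i<n. x i ^ p)"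
  define m where "m = (Sp / n) powr (1/p)"
  have Spp: "Sp > 0" using assms Sp_def by simp
  have np: "real n > 0" using assms by simp
  have mp: "m > 0" using Spp np m_def by simp
  have mpow: "m ^ p = Sp / n"
  proof -
    have "m ^ p = m powr p" using mp by (simp add: powr_realpow)
    also have "\<dots> = (Sp/n) powr ((1/p) * p)" by (simp add: m_def powr_powr)
    also have "\<dots> = Sp / n" using assms Spp np by simp
    finally show ?thesis .
  qed
  have "(\<Sum>i<n. (x i / m)^2) \<le> (\<Sum>i<n. (2/p) * (x i / m)^p + (1 - 2/p))"
    by (rule sum_mono, rule tangent_pow) (use assms mp in auto)
  also have "\<dots> = (2/p) * (\<Sum>i<n. x i ^ p) / m^p + n * (1 - 2/p)"
    by (simp add: sum.distrib sum_distrib_left sum_divide_distrib power_divide)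
  also have "\<dots> = n"
  proof -
    have q: "Sp = n * m^p" using mpow np by (simp add: field_simps)
    have r: "Sp / m^p = real n" using q mp by simp
    have "(2/p) * Sp / m^p = (2/p) * n" using r by (metis times_divide_eq_right)
    thus ?thesis unfolding Sp_def[symmetric] using assms(2) by (simp add: field_simps)
  qed
  finally have "(\<Sum>i<n. x i ^ 2) / m^2 \<le> n"
    by (simp add: power_divide sum_divide_distrib)
  hence S2: "(\<Sum>i<n. x i ^ 2) \<le> n * m^2" using mp by (simp add: field_simps)
  have "m^2 = Sp powr (2/p) * n powr (-(2/p))"
  proof -
    have "m^2 = m powr 2" using mp by (simp add: powr_realpow)
    also have "\<dots> = (Sp/n) powr (2/p)" by (simp add: m_def powr_powr)
    also have "\<dots> = Sp powr (2/p) / n powr (2/p)"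
      using Spp np by (meson less_imp_le powr_divide)
    also have "\<dots> = Sp powr (2/p) * n powr (-(2/p))"
      unfolding powr_minus_divide by simp
    finally show ?thesis .
  qed
  note meq = this
  have pn: "(pnorm n p x)^2 = Sp powr (2/p)"
  proof -
    have "(pnorm n p x)^2 = (Sp powr (1/p))^2" unfolding pnorm_def Sp_def by simp
    also have "\<dots> = (Sp powr (1/p)) powr 2" using Spp by (simp add: powr_realpow)
    also have "\<dots> = Sp powr (2/p)" by (simp add: powr_powr)
    finally show ?thesis .
  qed
  have nn: "(real n powr (1 - 1/p))^2 = n powr 2 * n powr (-(2/p))"
  proof -
    have "(real n powr (1 - 1/p))^2 = (real n powr (1 - 1/p)) powr 2" using np by (simp add: powr_realpow)
    also have "\<dots> = real n powr (2 - 2/p)" by (simp add: powr_powr algebra_simps)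
    also have "\<dots> = n powr 2 * n powr (-(2/p))" using powr_add[of "real n" 2 "-(2/p)"] np by simp
    finally show ?thesis .
  qed
  have n2: "real n * real n = n powr 2" using np by (simp add: powr_realpow power2_eq_square)
  have "real n * (\<Sum>i<n. x i ^ 2) \<le> real n * (n * m^2)" using S2 np by simp
  also have "\<dots> = (real n * real n) * (Sp powr (2/p) * n powr (-(2/p)))" using meq by simp
  also have "\<dots> = (n powr 2 * n powr (-(2/p))) * Sp powr (2/p)" unfolding n2 by simp
  also have "\<dots> = (real n powr (1 - 1/p))^2 * (pnorm n p x)^2" unfolding nn pn ..
  finally show ?thesis .
qed

theorem proposition2:
  fixes n p :: nat and \<epsilon> :: real and x :: "nat \<Rightarrow> real"
  assumes "n \<ge> 2" and "0 \<le> \<epsilon>" and "\<epsilon> \<le> 1" and "p \<ge> 2"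
    and "x \<in> Yset n \<epsilon> p"
  shows "(CV n x)^2 \<le> Bp n p \<epsilon>
         \<and> (\<forall>a\<in>{0..1}. \<forall>b\<in>{0..1}. a < b \<longrightarrow> Bp n p b < Bp n p a)
         \<and> Bp n p 0 = (Dp n p + 1)^2 - 1
         \<and> Bp n p 1 = 0"
proof -
  let ?D = "Dp n p"
  have np: "real n > 1" using assms by simp
  have e: "0 < 1 - 1 / real p" using assms by (simp add: field_simps)
  have "1 < real n powr (1 - 1 / real p)"
    using np e by (meson gr_one_powr)
  hence Dpos: "?D > 0" by (simp add: Dp_def)
  have D1: "?D + 1 = real n powr (1 - 1 / real p)" by (simp add: Dp_def)
  have xnn: "\<And>i. i < n \<Longrightarrow> x i \<ge> 0" and xs: "(\<Sum>i<n. x i) = 1"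
    and xb: "(1 + \<epsilon> * ?D) * pnorm n p x \<le> 1"
    using assms(5) by (auto simp: Yset_def Defs.simplex_def)
  have Spp: "(\<Sum>i<n. x i ^ p) > 0"
  proof (rule ccontr)
    assume "\<not> ?thesis"
    moreover have "(\<Sum>i<n. x i ^ p) \<ge> 0" by (intro sum_nonneg) (simp add: xnn)
    ultimately have "(\<Sum>i<n. x i ^ p) = 0" by simp
    hence "\<forall>i\<in>{..<n}. x i ^ p = 0" using xnn by (subst (asm) sum_nonneg_eq_0_iff) auto
    hence "\<forall>i\<in>{..<n}. x i = 0" by simp
    hence "(\<Sum>i<n. x i) = 0" by simp
    thus False using xs by simp
  qed
  have PM: "real n * (\<Sum>i<n. x i ^ 2) \<le> (?D + 1)^2 * (pnorm n p x)^2"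
    using power_mean[of n p x] assms Spp xnn D1 by simp
  have pos: "1 + \<epsilon> * ?D > 0" using Dpos assms(2) by (smt (verit) mult_nonneg_nonneg)
  have pn0: "pnorm n p x \<ge> 0" by (simp add: pnorm_def)
  have "pnorm n p x \<le> 1 / (1 + \<epsilon> * ?D)" using xb pos by (simp add: field_simps)
  hence "(pnorm n p x)^2 \<le> (1 / (1 + \<epsilon> * ?D))^2" using power_mono[OF _ pn0] by blast
  hence "(?D + 1)^2 * (pnorm n p x)^2 \<le> (?D + 1)^2 * (1 / (1 + \<epsilon> * ?D))^2"
    by (rule mult_left_mono) simp
  hence main: "real n * (\<Sum>i<n. x i ^ 2) - 1 \<le> Bp n p \<epsilon>"
    using PM by (simp add: Bp_def power_divide)
  have CVeq: "(CV n x)^2 = real n * (\<Sum>i<n. x i ^ 2) - 1"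
  proof -
    have A: "(\<Sum>i<n. (x i - 1 / real n)^2) = (\<Sum>i<n. x i ^ 2) - 1 / real n"
    proof -
      have "(\<Sum>i<n. (x i - 1 / real n)^2) = (\<Sum>i<n. x i ^ 2) - 2 / real n * (\<Sum>i<n. x i) + real n * (1 / real n)^2"
        by (simp add: power2_diff sum.distrib sum_subtractf sum_distrib_left sum_divide_distrib algebra_simps)
      also have "\<dots> = (\<Sum>i<n. x i ^ 2) - 1 / real n" using xs np by (simp add: power2_eq_square)
      finally show ?thesis .
    qed
    have nn: "0 \<le> (1 / real n) * (\<Sum>i<n. (x i - 1 / real n)^2)"
      using np by (simp add: sum_nonneg)
    have "(CV n x)^2 = (1 / real n) * (\<Sum>i<n. (x i - 1 / real n)^2) * (real n)^2"
    proof -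
      have "(CV n x)^2 = (sqrt ((1 / real n) * (\<Sum>i<n. (x i - 1 / real n)^2)))^2 / (1 / real n)^2"
        unfolding CV_def Let_def by (rule power_divide)
      also have "\<dots> = (1 / real n) * (\<Sum>i<n. (x i - 1 / real n)^2) / (1 / real n)^2"
        using nn by (simp only: real_sqrt_pow2)
      also have "\<dots> = (1 / real n) * (\<Sum>i<n. (x i - 1 / real n)^2) * (real n)^2"
        by (simp add: power_one_over)
      finally show ?thesis .
    qed
    also have "\<dots> = real n * (\<Sum>i<n. x i ^ 2) - 1" unfolding A using np
      by (simp add: power2_eq_square field_simps)
    finally show ?thesis .
  qed
  have mono: "\<forall>a\<in>{0..1}. \<forall>b\<in>{0..1}. a < b \<longrightarrow> Bp n p b < Bp n p a"
  proof (intro ballI impI)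
    fix a b :: real assume a: "a \<in> {0..1}" and b: "b \<in> {0..1}" and ab: "a < b"
    have pa: "1 + a * ?D > 0" using a Dpos by (smt (verit) atLeastAtMost_iff mult_nonneg_nonneg)
    have lt: "1 + a * ?D < 1 + b * ?D" using ab Dpos by simp
    have pb: "1 + b * ?D > 0" using pa lt by simp
    have "(1 + a * ?D)^2 < (1 + b * ?D)^2" using pa lt by (simp add: power_strict_mono)
    moreover have "(?D + 1)^2 > 0" using Dpos by simp
    ultimately have "(?D + 1)^2 / (1 + b * ?D)^2 < (?D + 1)^2 / (1 + a * ?D)^2"
      using pa pb Dpos by (intro divide_strict_left_mono mult_pos_pos zero_less_power) auto
    thus "Bp n p b < Bp n p a" by (simp add: Bp_def)
  qed
  have "Bp n p 1 = 0" using Dpos by (simp add: Bp_def add.commute)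
  moreover have "Bp n p 0 = (?D + 1)^2 - 1" by (simp add: Bp_def)
  ultimately show ?thesis using main CVeq mono by simp
qed

end
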